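(* Let $\Omega$ be a finite nonempty set, $\mathcal{A}=2^\Omega$, and let $\mu$ be a $q$-measure on $\mathcal{A}$. If $\phi$ and $\psi$ are quadratic coevents on $\mathcal{A}$ that are both 1-generated by $\mu$, then $\phi=\psi$.
   Context: Let $\Omega$ be a finite nonempty set and $\mathcal{A}=2^\Omega$. A coevent is a map $\phi:\mathcal{A}\to\{0,1\}$ with $\phi(\emptyset)=0$. A coevent $\phi$ is quadratic if for all pairwise disjoint $A,B,C\in\mathcal{A}$: $\phi(A\cup B\cup C)=\phi(A\cup B)\oplus\phi(A\cup C)\oplus\phi(B\cup C)\oplus\phi(A)\oplus\phi(B)\oplus\phi(C)$, where $\oplus$ is addition mod 2. For $f:\Omega\to[0,\infty)$ and a coevent $\phi$, the $q$-integral is $\int f\,d\phi=\int_0^\infty \phi(\{\omega\in\Omega: f(\omega)>\lambda\})\,d\lambda$ (Lebesgue measure in $\lambda$), and for $A\in\mathcal{A}$, $\int_A f\,d\phi=\int f\chi_A\,d\phi$. A $q$-measure is a map $\mu:\mathcal{A}\to[0,\infty)$ such that for all pairwise disjoint $A,B,C\in\mathcal{A}$: $\mu(A\cup B\cup C)=\mu(A\cup B)+\mu(A\cup C)+\mu(B\cup C)-\mu(A)-\mu(B)-\mu(C)$. The $q$-measure $\mu$ 1-generates $\phi$ if there is a function $f:\Omega\to(0,\infty)$ with $\mu(A)=\int_A f\,d\phi$ for all $A\in\mathcal{A}$. *)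

theory Defs
  imports "HOL-Analysis.Analysis"
begin

text \<open>Omega is the (finite, nonempty) universe of a type of class finite; A = 2^Omega is
  the type 'a set. Coevent values {0,1} are represented as naturals 0 and 1, and
  addition mod 2 is (x + y) mod 2.\<close>

definition coevent :: "('a::finite set \<Rightarrow> nat) \<Rightarrow> bool" where
  "coevent \<phi> \<longleftrightarrow> (\<forall>A. \<phi> A \<in> {0, 1}) \<and> \<phi> {} = 0"

definition pairwise_disjoint3 :: "'a set \<Rightarrow> 'a set \<Rightarrow> 'a set \<Rightarrow> bool" where
  "pairwise_disjoint3 A B C \<longleftrightarrow> A \<inter> B = {} \<and> A \<inter> C = {} \<and> B \<inter> C = {}"

definition quadratic_coevent :: "('a::finite set \<Rightarrow> nat) \<Rightarrow> bool" where
  "quadratic_coevent \<phi> \<longleftrightarrow> coevent \<phi> \<and>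
     (\<forall>A B C. pairwise_disjoint3 A B C \<longrightarrow>
        \<phi> (A \<union> B \<union> C) =
          (\<phi> (A \<union> B) + \<phi> (A \<union> C) + \<phi> (B \<union> C) + \<phi> A + \<phi> B + \<phi> C) mod 2)"

definition q_integral :: "('a::finite \<Rightarrow> real) \<Rightarrow> ('a set \<Rightarrow> nat) \<Rightarrow> real" where
  "q_integral f \<phi> = (LINT t:{0..}|lborel. real (\<phi> {\<omega>. f \<omega> > t}))"

definition q_integral_on :: "'a::finite set \<Rightarrow> ('a \<Rightarrow> real) \<Rightarrow> ('a set \<Rightarrow> nat) \<Rightarrow> real" where
  "q_integral_on A f \<phi> = q_integral (\<lambda>\<omega>. f \<omega> * indicator A \<omega>) \<phi>"

definition q_measure :: "('a::finite set \<Rightarrow> real) \<Rightarrow> bool" where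
  "q_measure \<mu> \<longleftrightarrow> (\<forall>A. \<mu> A \<ge> 0) \<and>
     (\<forall>A B C. pairwise_disjoint3 A B C \<longrightarrow>
        \<mu> (A \<union> B \<union> C) = \<mu> (A \<union> B) + \<mu> (A \<union> C) + \<mu> (B \<union> C) - \<mu> A - \<mu> B - \<mu> C)"

definition one_generates :: "('a::finite set \<Rightarrow> real) \<Rightarrow> ('a set \<Rightarrow> nat) \<Rightarrow> bool" where
  "one_generates \<mu> \<phi> \<longleftrightarrow>
     (\<exists>f::'a \<Rightarrow> real. (\<forall>\<omega>. f \<omega> > 0) \<and> (\<forall>A. \<mu> A = q_integral_on A f \<phi>))"

end

theory Submission
  imports Defs
begin

lemma step_int:
  fixes g :: "real \<Rightarrow> real"
  assumes "0 \<le> x" "x \<le> y"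
    and "\<And>t. t \<ge> 0 \<Longrightarrow> g t = (if t < x then c else if t < y then d else 0)"
  shows "(LINT t:{0..}|lborel. g t) = c*x + d*(y-x)"
proof -
  have eq: "(\<lambda>t. indicator {0..} t *\<^sub>R g t) = (\<lambda>t. c * indicator {0..<x} t + d * indicator {x..<y} t)"
  proof
    fix t :: real
    show "indicator {0..} t *\<^sub>R g t = c * indicator {0..<x} t + d * indicator {x..<y} t"
      using assms by (cases "t \<ge> 0") (auto simp: indicator_def)
  qed
  have i1: "integrable lborel (\<lambda>t::real. c * indicator {0..<x} t)"
    using assms(1,2) by (intro integrable_mult_right integrable_real_indicator) auto
  have i2: "integrable lborel (\<lambda>t::real. d * indicator {x..<y} t)"
    using assms(1,2) by (intro integrable_mult_right integrable_real_indicator) auto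
  have "(LINT t:{0..}|lborel. g t) = integral\<^sup>L lborel (\<lambda>t. c * indicator {0..<x} t + d * indicator {x..<y} t)"
    unfolding set_lebesgue_integral_def eq ..
  also have "\<dots> = c*x + d*(y-x)"
    using assms(1,2) by (subst Bochner_Integration.integral_add[OF i1 i2]) (simp add: measure_def)
  finally show ?thesis .
qed

lemma single_formula:
  assumes "coevent \<phi>" "\<forall>w. f w > 0"
  shows "q_integral_on {a} f \<phi> = real (\<phi> {a}) * f a"
proof -
  have e: "\<phi> {} = 0" using assms(1) by (simp add: coevent_def)
  have "q_integral_on {a} f \<phi> = real (\<phi> {a}) * f a + real (\<phi> {a}) * (f a - f a)"
    unfolding q_integral_on_def q_integral_def
  proof (rule step_int)
    show "0 \<le> f a" using assms(2) by (simp add: less_imp_le)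
    fix t :: real assume t: "t \<ge> 0"
    have "{\<omega>. f \<omega> * indicator {a} \<omega> > t} = (if t < f a then {a} else {})"
      using t by (auto simp: indicator_def)
    then show "real (\<phi> {\<omega>. f \<omega> * indicator {a} \<omega> > t}) =
      (if t < f a then real (\<phi> {a}) else if t < f a then real (\<phi> {a}) else 0)"
      using e by simp
  qed simp
  then show ?thesis by simp
qed

lemma pair_formula:
  assumes "coevent \<phi>" "\<forall>w. f w > 0" "a \<noteq> b" "f a \<le> f b"
  shows "q_integral_on {a,b} f \<phi> = real (\<phi> {a,b}) * f a + real (\<phi> {b}) * (f b - f a)"
  unfolding q_integral_on_def q_integral_def
proof (rule step_int)
  have e: "\<phi> {} = 0" using assms(1) by (simp add: coevent_def)
  show "0 \<le> f a" using assms(2) by (simp add: less_imp_le)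
  show "f a \<le> f b" by fact
  fix t :: real assume t: "t \<ge> 0"
  have "{\<omega>. f \<omega> * indicator {a,b} \<omega> > t} = (if t < f a then {a,b} else if t < f b then {b} else {})"
    using t assms(4) by (auto simp: indicator_def)
  then show "real (\<phi> {\<omega>. f \<omega> * indicator {a,b} \<omega> > t}) =
      (if t < f a then real (\<phi> {a,b}) else if t < f b then real (\<phi> {b}) else 0)"
    using e by simp
qed

definition V :: "('a::finite set \<Rightarrow> nat) \<Rightarrow> ('a \<Rightarrow> real) \<Rightarrow> 'a \<Rightarrow> 'a \<Rightarrow> real" where
  "V \<phi> f a b = (if f a \<le> f b then real (\<phi> {a,b}) * f a + real (\<phi> {b}) * (f b - f a)
     else real (\<phi> {a,b}) * f b + real (\<phi> {a}) * (f a - f b))"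

lemma pair_V:
  assumes "coevent \<phi>" "\<forall>w. f w > 0" "a \<noteq> b"
  shows "q_integral_on {a,b} f \<phi> = V \<phi> f a b"
proof (cases "f a \<le> f b")
  case True then show ?thesis using pair_formula[OF assms] by (simp add: V_def)
next
  case False
  have "q_integral_on {b,a} f \<phi> = real (\<phi> {b,a}) * f b + real (\<phi> {a}) * (f a - f b)"
    using pair_formula[OF assms(1,2)] assms(3) False by auto
  then show ?thesis using False by (simp add: V_def insert_commute)
qed

lemma arith01:
  fixes fa fb ga gb :: real and sa sb p q :: nat
  assumes "fa > 0" "fb > 0" "ga > 0" "gb > 0"
    "sa \<in> {0,1}" "sb \<in> {0,1}" "p \<in> {0,1}" "q \<in> {0,1}"
    "real sa * fa = real sa * ga" "real sb * fb = real sb * gb"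
    "(if fa \<le> fb then real p * fa + real sb * (fb - fa) else real p * fb + real sa * (fa - fb)) =
     (if ga \<le> gb then real q * ga + real sb * (gb - ga) else real q * gb + real sa * (ga - gb))"
  shows "p = q"
  using assms(5-8) apply (elim insertE emptyE)
  using assms(1-4,9-11) by (simp_all split: if_splits)

lemma ind:
  fixes \<phi> \<psi> :: "'a::finite set \<Rightarrow> nat"
  assumes cp: "\<phi> {} = 0" and cq: "\<psi> {} = 0" and qp: "\<And>A B C. pairwise_disjoint3 A B C \<Longrightarrow>
        \<phi> (A \<union> B \<union> C) =
          (\<phi> (A \<union> B) + \<phi> (A \<union> C) + \<phi> (B \<union> C) + \<phi> A + \<phi> B + \<phi> C) mod 2"
   and qq: "\<And>A B C. pairwise_disjoint3 A B C \<Longrightarrow>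
        \<psi> (A \<union> B \<union> C) =
          (\<psi> (A \<union> B) + \<psi> (A \<union> C) + \<psi> (B \<union> C) + \<psi> A + \<psi> B + \<psi> C) mod 2"
   and single: "\<And>a. \<phi> {a} = \<psi> {a}" and pair: "\<And>a b. a \<noteq> b \<Longrightarrow> \<phi> {a,b} = \<psi> {a,b}"
  shows "\<phi> S = \<psi> S"
proof (induction "card S" arbitrary: S rule: less_induct)
  case less
  show ?case
  proof (cases "card S \<le> 2")
    case True
    then consider "card S = 0" | "card S = 1" | "card S = 2" by linarith
    then show ?thesis
    proof cases
      case 1 then have "S = {}" by (simp add: card_eq_0_iff)
      then show ?thesis using cp cq by simp
    next
      case 2 then obtain a where "S = {a}" using card_1_singletonE by blast
      then show ?thesis using single[of a] by simp
    next
      case 3 then obtain a b where "S = {a,b}" "a \<noteq> b" using card_2_iff by metis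
      then show ?thesis using pair[of a b] by simp
    qed
  next
    case False
    then have "S \<noteq> {}" by (intro notI) simp
    then obtain a where a: "a \<in> S" by blast
    have c1: "card (S - {a}) = card S - 1" using a by simp
    then have "S - {a} \<noteq> {}" using False by (intro notI) simp
    then obtain b where b: "b \<in> S" "b \<noteq> a" by blast
    define C where "C = S - {a,b}"
    have cab: "card {a,b} = 2" "card {b,a} = 2" using b by simp_all
    have cC: "card C = card S - 2" unfolding C_def
      using card_Diff_subset[of "{a,b}" S] a b cab by simp
    have S: "S = {a} \<union> {b} \<union> C" using a b unfolding C_def by auto
    have pd: "pairwise_disjoint3 {a} {b} C" using b unfolding C_def pairwise_disjoint3_def by auto
    have cac: "card ({a} \<union> C) = card C + 1" "card ({b} \<union> C) = card C + 1"
      unfolding C_def by (simp_all add: card_insert_if)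
    have lt: "card ({a} \<union> {b}) < card S" "card ({a} \<union> C) < card S" "card ({b} \<union> C) < card S"
      "card {a} < card S" "card {b} < card S" "card C < card S"
      using False cC cac cab by simp_all
    have "\<phi> S = (\<phi> ({a} \<union> {b}) + \<phi> ({a} \<union> C) + \<phi> ({b} \<union> C) + \<phi> {a} + \<phi> {b} + \<phi> C) mod 2"
      using qp[OF pd] S by simp
    also have "\<dots> = (\<psi> ({a} \<union> {b}) + \<psi> ({a} \<union> C) + \<psi> ({b} \<union> C) + \<psi> {a} + \<psi> {b} + \<psi> C) mod 2"
      using less.hyps[OF lt(1)] less.hyps[OF lt(2)] less.hyps[OF lt(3)]
        less.hyps[OF lt(4)] less.hyps[OF lt(5)] less.hyps[OF lt(6)] by simp
    also have "\<dots> = \<psi> S" using qq[OF pd] S by simp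
    finally show ?thesis .
  qed
qed

theorem theorem5p2:
  fixes \<mu> :: "'a::finite set \<Rightarrow> real" and \<phi> \<psi> :: "'a set \<Rightarrow> nat"
  assumes "q_measure \<mu>"
    and "quadratic_coevent \<phi>" and "quadratic_coevent \<psi>"
    and "one_generates \<mu> \<phi>" and "one_generates \<mu> \<psi>"
  shows "\<phi> = \<psi>"
proof -
  obtain f where fp: "\<forall>w. f w > 0" and fm: "\<forall>A. \<mu> A = q_integral_on A f \<phi>"
    using assms(4) by (auto simp: one_generates_def)
  obtain g where gp: "\<forall>w. g w > 0" and gm: "\<forall>A. \<mu> A = q_integral_on A g \<psi>"
    using assms(5) by (auto simp: one_generates_def)
  have cp: "coevent \<phi>" and qp: "\<forall>A B C. pairwise_disjoint3 A B C \<longrightarrow>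
        \<phi> (A \<union> B \<union> C) =
          (\<phi> (A \<union> B) + \<phi> (A \<union> C) + \<phi> (B \<union> C) + \<phi> A + \<phi> B + \<phi> C) mod 2"
    using assms(2) by (auto simp: quadratic_coevent_def)
  have cq: "coevent \<psi>" and qq: "\<forall>A B C. pairwise_disjoint3 A B C \<longrightarrow>
        \<psi> (A \<union> B \<union> C) =
          (\<psi> (A \<union> B) + \<psi> (A \<union> C) + \<psi> (B \<union> C) + \<psi> A + \<psi> B + \<psi> C) mod 2"
    using assms(3) by (auto simp: quadratic_coevent_def)
  have v01: "\<phi> A \<in> {0,1}" "\<psi> A \<in> {0,1}" for A using cp cq by (auto simp: coevent_def)
  have single: "\<phi> {a} = \<psi> {a}" for a
  proof -
    have "real (\<phi> {a}) * f a = real (\<psi> {a}) * g a"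
      using fm gm single_formula[OF cp fp, of a] single_formula[OF cq gp, of a] by simp
    moreover have "\<phi> {a} \<in> {0,1}" "\<psi> {a} \<in> {0,1}" "f a > 0" "g a > 0"
      using v01 fp gp by auto
    ultimately show ?thesis by auto
  qed
  have pair: "\<phi> {a,b} = \<psi> {a,b}" if "a \<noteq> b" for a b
  proof -
    have "V \<phi> f a b = V \<psi> g a b"
      using fm gm pair_V[OF cp fp that] pair_V[OF cq gp that] by simp
    moreover have "real (\<phi> {a}) * f a = real (\<phi> {a}) * g a"
      using fm gm single_formula[OF cp fp, of a] single_formula[OF cq gp, of a] single[of a] by simp
    moreover have "real (\<phi> {b}) * f b = real (\<phi> {b}) * g b"
      using fm gm single_formula[OF cp fp, of b] single_formula[OF cq gp, of b] single[of b] by simp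
    ultimately show ?thesis
      by (intro arith01[of "f a" "f b" "g a" "g b" "\<phi> {a}" "\<phi> {b}" "\<phi> {a,b}" "\<psi> {a,b}"])
        (use fp gp v01 single in \<open>auto simp: V_def\<close>)
  qed
  have "\<phi> S = \<psi> S" for S
    by (rule ind[of \<phi> \<psi>]) (use cp cq qp qq single pair in \<open>auto simp: coevent_def\<close>)
  then show ?thesis by blast
qed

end
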